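(* Let $\mathbb{F}_q$ be a finite field with $\mathrm{char}(\mathbb{F}_q)>3$ and $3\mid q-1$, and let $z\in\mathbb{F}_q^\times$ be a non-cube. Then $\mathfrak{sl}_3(\mathbb{F}_q)$ has exactly two $J_3$-decompositions up to conjugacy, represented by $J_3(1,1)$ and $J_3(1,z)$. More precisely: $J_3(1,z^2)$ is conjugate to $J_3(1,z)$, $J_3(1,z)$ is not conjugate to $J_3(1,1)$, and every $J_3(a,b)$ with $a,b\in\mathbb{F}_q^\times$ is conjugate to one of $J_3(1,1)$, $J_3(1,z)$.
   Context: $\mathfrak{sl}_3(\mathbb{F}_q)$ is the Lie algebra of $3\times3$ traceless matrices over $\mathbb{F}_q$. Fix a primitive cube root of unity $u\in\mathbb{F}_q$. For nonzero $a,b\in\mathbb{F}_q$, $J_3(a,b)$ denotes the decomposition $\mathfrak{sl}_3(\mathbb{F}_q)=H_0\oplus H_1\oplus H_2\oplus H_3$, where $H_0$ is the subalgebra of traceless diagonal matrices and, for $j=1,2,3$ with $(\lambda_j,\mu_j)=(1,1),(u,u^2),(u^2,u)$ respectively, $H_j=\left\langle \begin{pmatrix}0&1&0\\0&0&\lambda_j a\\ \mu_j ab&0&0\end{pmatrix},\begin{pmatrix}0&0&1\\ \mu_j ab&0&0\\0&\lambda_j b&0\end{pmatrix}\right\rangle_{\mathbb{F}_q}$. A $J_3$-decomposition is any decomposition $J_3(a,b)$ with $a,b\in\mathbb{F}_q^\times$. Two such decompositions are conjugate if there is a Lie algebra automorphism of $\mathfrak{sl}_3(\mathbb{F}_q)$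 mapping each component of the first onto exactly one component of the second. *)

theory Defs
  imports "HOL-Analysis.Analysis"
begin

definition sl3 :: "('a::field ^ 3 ^ 3) set" where
  "sl3 = {A. trace A = 0}"

definition lie_bracket :: "'a::field ^ 3 ^ 3 \<Rightarrow> 'a ^ 3 ^ 3 \<Rightarrow> 'a ^ 3 ^ 3" where
  "lie_bracket A B = A ** B - B ** A"

definition msmult :: "'a::field \<Rightarrow> 'a ^ 3 ^ 3 \<Rightarrow> 'a ^ 3 ^ 3" where
  "msmult c A = (\<chi> i j. c * A $ i $ j)"

definition lie_aut_sl3 :: "('a::field ^ 3 ^ 3 \<Rightarrow> 'a ^ 3 ^ 3) \<Rightarrow> bool" where
  "lie_aut_sl3 f \<longleftrightarrow>
     bij_betw f sl3 sl3 \<and>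
     (\<forall>A\<in>sl3. \<forall>B\<in>sl3. f (A + B) = f A + f B) \<and>
     (\<forall>c. \<forall>A\<in>sl3. f (msmult c A) = msmult c (f A)) \<and>
     (\<forall>A\<in>sl3. \<forall>B\<in>sl3. f (lie_bracket A B) = lie_bracket (f A) (f B))"

definition span2 :: "'a::field ^ 3 ^ 3 \<Rightarrow> 'a ^ 3 ^ 3 \<Rightarrow> ('a ^ 3 ^ 3) set" where
  "span2 X Y = {msmult c X + msmult d Y | c d. True}"

definition diag0 :: "('a::field ^ 3 ^ 3) set" where
  "diag0 = {A. trace A = 0 \<and> (\<forall>i j. i \<noteq> j \<longrightarrow> A $ i $ j = 0)}"

definition J3X :: "'a::field \<Rightarrow> 'a \<Rightarrow> 'a \<Rightarrow> 'a \<Rightarrow> 'a ^ 3 ^ 3" where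
  "J3X lam mu a b = vector [vector [0, 1, 0], vector [0, 0, lam * a], vector [mu * a * b, 0, 0]]"

definition J3Y :: "'a::field \<Rightarrow> 'a \<Rightarrow> 'a \<Rightarrow> 'a \<Rightarrow> 'a ^ 3 ^ 3" where
  "J3Y lam mu a b = vector [vector [0, 0, 1], vector [mu * a * b, 0, 0], vector [0, lam * b, 0]]"

definition J3 :: "'a::field \<Rightarrow> 'a \<Rightarrow> 'a \<Rightarrow> nat \<Rightarrow> ('a ^ 3 ^ 3) set" where
  "J3 u a b j =
     (if j = 0 then diag0
      else if j = 1 then span2 (J3X 1 1 a b) (J3Y 1 1 a b)
      else if j = 2 then span2 (J3X u (u^2) a b) (J3Y u (u^2) a b)
      else span2 (J3X (u^2) u a b) (J3Y (u^2) u a b))"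

definition decomp_conj :: "(nat \<Rightarrow> ('a::field ^ 3 ^ 3) set) \<Rightarrow> (nat \<Rightarrow> ('a ^ 3 ^ 3) set) \<Rightarrow> bool" where
  "decomp_conj D E \<longleftrightarrow>
     (\<exists>f. lie_aut_sl3 f \<and> (\<forall>i\<in>{0..3}. \<exists>!j. j \<in> {0..3} \<and> f ` D i = E j))"

end

theory Submission
  imports Defs
begin



lemma mat3_eq: "(A::'a^3^3) = B \<longleftrightarrow> (\<forall>i j. A$i$j = B$i$j)"
  by (simp add: vec_eq_iff)

lemma mm_entry: "((A::'a::semiring_1^3^3) ** B)$i$j = A$i$1*B$1$j + A$i$2*B$2$j + A$i$3*B$3$j"
  by (simp add: matrix_matrix_mult_def sum_3)

lemma msmult_entry[simp]: "msmult c A $ i $ j = c * A$i$j"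
  by (simp add: msmult_def)

lemma J3X_entries[simp]:
  "J3X l m a b $1$1 = 0" "J3X l m a b $1$2 = 1" "J3X l m a b $1$3 = 0"
  "J3X l m a b $2$1 = 0" "J3X l m a b $2$2 = 0" "J3X l m a b $2$3 = l*a"
  "J3X l m a b $3$1 = m*a*b" "J3X l m a b $3$2 = 0" "J3X l m a b $3$3 = 0"
  by (simp_all add: J3X_def)

lemma J3Y_entries[simp]:
  "J3Y l m a b $1$1 = 0" "J3Y l m a b $1$2 = 0" "J3Y l m a b $1$3 = 1"
  "J3Y l m a b $2$1 = m*a*b" "J3Y l m a b $2$2 = 0" "J3Y l m a b $2$3 = 0"
  "J3Y l m a b $3$1 = 0" "J3Y l m a b $3$2 = l*b" "J3Y l m a b $3$3 = 0"
  by (simp_all add: J3Y_def)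

lemma test: "(J3X 1 1 1 z :: 'a::field^3^3) ** J3X 1 1 1 z = J3Y 1 1 1 z"
  by (simp add: mat3_eq forall_3 mm_entry)

lemma tr3: "trace (A::'a::field^3^3) = A$1$1 + A$2$2 + A$3$3"
  by (simp add: trace_def sum_3)




type_synonym 'a m3 = "'a^3^3"

lemma add_entry: "((A::'a::field m3) + B)$i$j = A$i$j + B$i$j" by simp
lemma sub_entry: "((A::'a::field m3) - B)$i$j = A$i$j - B$i$j" by simp

lemma mm_radd: "((A::'a::field m3) + B) ** (C::'a m3) = A ** C + B ** C"
  by (rule iffD2[OF mat3_eq]) (simp add: mm_entry algebra_simps)
lemma mm_ladd: "(C::'a::field m3) ** (A + B::'a m3) = C ** A + C ** B"
  by (rule iffD2[OF mat3_eq]) (simp add: mm_entry algebra_simps)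
lemma mm_rsub: "((A::'a::field m3) - B) ** (C::'a m3) = A ** C - B ** C"
  by (rule iffD2[OF mat3_eq]) (simp add: mm_entry algebra_simps)
lemma mm_lsub: "(C::'a::field m3) ** (A - B::'a m3) = C ** A - C ** B"
  by (rule iffD2[OF mat3_eq]) (simp add: mm_entry algebra_simps)
lemma mm_lsm: "msmult c (A::'a::field m3) ** (B::'a m3) = msmult c (A ** B)"
  by (rule iffD2[OF mat3_eq]) (simp add: mm_entry algebra_simps)
lemma mm_rsm: "(A::'a::field m3) ** msmult c (B::'a m3) = msmult c (A ** B)"
  by (rule iffD2[OF mat3_eq]) (simp add: mm_entry algebra_simps)
lemma sm_add: "msmult c ((A::'a::field m3) + B) = msmult c A + msmult c B"
  by (rule iffD2[OF mat3_eq]) (simp add: algebra_simps)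
lemma sm_sm: "msmult c (msmult d (A::'a::field m3)) = msmult (c*d) A"
  by (rule iffD2[OF mat3_eq]) (simp add: algebra_simps)
lemma sm_1: "msmult 1 (A::'a::field m3) = A"
  by (simp add: mat3_eq)
lemma sm_0: "msmult 0 (A::'a::field m3) = 0"
  by (simp add: mat3_eq)

definition conjm :: "'a::field m3 \<Rightarrow> 'a m3 \<Rightarrow> 'a m3 \<Rightarrow> 'a m3" where
  "conjm g h A = g ** A ** h"

lemma conjm_lin: "conjm g h (msmult c X + msmult d Y) = msmult c (conjm g h X) + msmult d (conjm g h Y)"
  by (simp add: conjm_def mm_radd mm_ladd mm_lsm mm_rsm)

lemma conj_lie_aut:
  fixes g h :: "'a::field m3"
  assumes gh: "g ** h = mat 1" and hg: "h ** g = mat 1"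
  shows "lie_aut_sl3 (conjm g h)"
proof -
  have tr: "trace (conjm g h A) = trace A" if "h ** g = mat 1" for A g h :: "'a m3"
  proof -
    have "trace (conjm g h A) = trace ((g ** A) ** h)" by (simp add: conjm_def)
    also have "\<dots> = trace (h ** (g ** A))" by (rule trace_mul_sym)
    also have "\<dots> = trace A" using that by (simp add: matrix_mul_assoc)
    finally show ?thesis .
  qed
  have inv: "conjm h g (conjm g h A) = A" if "h ** g = mat 1" for A g h :: "'a m3"
  proof -
    have "conjm h g (conjm g h A) = (h ** g) ** A ** (h ** g)"
      by (simp add: conjm_def matrix_mul_assoc)
    then show ?thesis using that by simp
  qed
  have bij: "bij_betw (conjm g h) sl3 sl3"
    by (rule bij_betw_byWitness[where f'="conjm h g"])
       (auto simp: sl3_def tr inv gh hg)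
  have br: "conjm g h (lie_bracket A B) = lie_bracket (conjm g h A) (conjm g h B)" for A B
  proof -
    have e: "g ** A ** h ** (g ** B ** h) = g ** (A ** B) ** h" for A B
    proof -
      have "g ** A ** h ** (g ** B ** h) = g ** A ** (h ** g) ** B ** h"
        by (simp add: matrix_mul_assoc)
      then show ?thesis using hg by (simp add: matrix_mul_assoc)
    qed
    show ?thesis unfolding lie_bracket_def conjm_def e mm_rsub mm_lsub by simp
  qed
  show ?thesis unfolding lie_aut_sl3_def
    using bij br
    by (auto simp: conjm_def mm_radd mm_ladd mm_lsm mm_rsm)
qed



lemma span2_image:
  "conjm g h ` span2 X Y = span2 (conjm g h X) (conjm g h Y)"
proof
  show "conjm g h ` span2 X Y \<subseteq> span2 (conjm g h X) (conjm g h Y)"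
  proof
    fix A assume "A \<in> conjm g h ` span2 X Y"
    then obtain c d where "A = conjm g h (msmult c X + msmult d Y)" by (auto simp: span2_def)
    then have "A = msmult c (conjm g h X) + msmult d (conjm g h Y)" by (simp add: conjm_lin)
    then show "A \<in> span2 (conjm g h X) (conjm g h Y)" unfolding span2_def by blast
  qed
  show "span2 (conjm g h X) (conjm g h Y) \<subseteq> conjm g h ` span2 X Y"
  proof
    fix A assume "A \<in> span2 (conjm g h X) (conjm g h Y)"
    then obtain c d where A: "A = msmult c (conjm g h X) + msmult d (conjm g h Y)"
      by (auto simp: span2_def)
    then have "A = conjm g h (msmult c X + msmult d Y)" by (simp add: conjm_lin)
    moreover have "msmult c X + msmult d Y \<in> span2 X Y" unfolding span2_def by blast
    ultimately show "A \<in> conjm g h ` span2 X Y" by blast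
  qed
qed

lemma span2_scale:
  fixes X Y :: "'a::field m3"
  assumes "k \<noteq> 0" "l \<noteq> 0"
  shows "span2 (msmult k X) (msmult l Y) = span2 X Y"
proof
  show "span2 (msmult k X) (msmult l Y) \<subseteq> span2 X Y"
    unfolding span2_def by (auto simp: sm_sm)
  show "span2 X Y \<subseteq> span2 (msmult k X) (msmult l Y)"
  proof
    fix A assume "A \<in> span2 X Y"
    then obtain c d where A: "A = msmult c X + msmult d Y" by (auto simp: span2_def)
    have "A = msmult (c/k) (msmult k X) + msmult (d/l) (msmult l Y)"
      using assms by (simp add: A sm_sm)
    then show "A \<in> span2 (msmult k X) (msmult l Y)" unfolding span2_def by blast
  qed
qed

lemma span2_swap: "span2 X Y = span2 Y X"
proof -
  have "span2 X Y \<subseteq> span2 Y X" for X Y :: "'a::field m3"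
  proof
    fix A assume "A \<in> span2 X Y"
    then obtain c d where "A = msmult c X + msmult d Y" by (auto simp: span2_def)
    then have "A = msmult d Y + msmult c X" by (simp add: add.commute)
    then show "A \<in> span2 Y X" unfolding span2_def by blast
  qed
  then show ?thesis by blast
qed



lemma decomp_conjI:
  assumes "lie_aut_sl3 f"
    and "\<And>i. i \<in> {0..3} \<Longrightarrow> \<exists>j\<in>{0..3}. f ` D i = E j"
    and "\<And>j k. j \<in> {0..3} \<Longrightarrow> k \<in> {0..3} \<Longrightarrow> E j = E k \<Longrightarrow> j = k"
  shows "decomp_conj D E"
  unfolding decomp_conj_def
proof (rule exI[of _ f], rule conjI, rule assms(1), rule ballI)
  fix i :: nat assume i: "i \<in> {0..3}"
  from assms(2)[OF i] obtain j where j: "j \<in> {0..3}" "f ` D i = E j" by (rule bexE)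
  show "\<exists>!j. j \<in> {0..3} \<and> f ` D i = E j"
  proof (rule ex1I[of _ j])
    show "j \<in> {0..3} \<and> f ` D i = E j" using j by (rule conjI)
    fix k assume k: "k \<in> {0..3} \<and> f ` D i = E k"
    then have "E k = E j" using j(2) by simp
    then show "k = j" using assms(3)[of k j] j(1) k by simp
  qed
qed


lemma decomp_conj_trans:
  assumes "decomp_conj D E" "decomp_conj E F"
  shows "decomp_conj D F"
proof -
  from assms(1) obtain f where f1: "lie_aut_sl3 f" and f2: "\<forall>i\<in>{0..3}. \<exists>!j. j \<in> {0..3} \<and> f ` D i = E j"
    unfolding decomp_conj_def by (elim exE conjE)
  from assms(2) obtain g where g1: "lie_aut_sl3 g" and g2: "\<forall>i\<in>{0..3}. \<exists>!j. j \<in> {0..3} \<and> g ` E i = F j"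
    unfolding decomp_conj_def by (elim exE conjE)
  have LA: "lie_aut_sl3 (g \<circ> f)"
  proof -
    have bf: "bij_betw f sl3 sl3" using f1 unfolding lie_aut_sl3_def by (rule conjunct1)
    have bg: "bij_betw g sl3 sl3" using g1 unfolding lie_aut_sl3_def by (rule conjunct1)
    have b: "bij_betw (g \<circ> f) sl3 sl3" using bf bg by (rule bij_betw_trans)
    have inf: "f A \<in> sl3" if "A \<in> sl3" for A
      using bf that by (rule bij_betw_apply)
    have fa1: "\<forall>A\<in>sl3. \<forall>B\<in>sl3. f (A + B) = f A + f B"
      using f1 unfolding lie_aut_sl3_def by (elim conjE) assumption
    have fa2: "\<forall>c. \<forall>A\<in>sl3. f (msmult c A) = msmult c (f A)"
      using f1 unfolding lie_aut_sl3_def by (elim conjE) assumption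
    have fa3: "\<forall>A\<in>sl3. \<forall>B\<in>sl3. f (lie_bracket A B) = lie_bracket (f A) (f B)"
      using f1 unfolding lie_aut_sl3_def by (elim conjE) assumption
    have ga1: "\<forall>A\<in>sl3. \<forall>B\<in>sl3. g (A + B) = g A + g B"
      using g1 unfolding lie_aut_sl3_def by (elim conjE) assumption
    have ga2: "\<forall>c. \<forall>A\<in>sl3. g (msmult c A) = msmult c (g A)"
      using g1 unfolding lie_aut_sl3_def by (elim conjE) assumption
    have ga3: "\<forall>A\<in>sl3. \<forall>B\<in>sl3. g (lie_bracket A B) = lie_bracket (g A) (g B)"
      using g1 unfolding lie_aut_sl3_def by (elim conjE) assumption
    show ?thesis unfolding lie_aut_sl3_def
      using b fa1 fa2 fa3 ga1 ga2 ga3 inf by (simp add: comp_def)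
  qed
  have CC: "\<forall>i\<in>{0..3}. \<exists>!k. k \<in> {0..3} \<and> (g \<circ> f) ` D i = F k"
  proof
    fix i :: nat assume i: "i \<in> {0..3}"
    have "\<exists>!j. j \<in> {0..3} \<and> f ` D i = E j" using f2 i by (rule bspec)
    then obtain j where j: "j \<in> {0..3}" "f ` D i = E j" by (elim ex1E conjE)
    have "\<exists>!k. k \<in> {0..3} \<and> g ` E j = F k" using g2 j(1) by (rule bspec)
    then obtain k where k: "k \<in> {0..3} \<and> g ` E j = F k"
      and ku: "\<And>k'. k' \<in> {0..3} \<and> g ` E j = F k' \<Longrightarrow> k' = k"
      by (elim ex1E) (metis that)
    show "\<exists>!k. k \<in> {0..3} \<and> (g \<circ> f) ` D i = F k"
    proof (rule ex1I[of _ k])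
      have "(g \<circ> f) ` D i = g ` (f ` D i)" by (rule image_comp[symmetric])
      also have "\<dots> = F k" using j(2) k by simp
      finally show "k \<in> {0..3} \<and> (g \<circ> f) ` D i = F k" using k by simp
      fix k' assume k': "k' \<in> {0..3} \<and> (g \<circ> f) ` D i = F k'"
      have "g ` E j = g ` (f ` D i)" using j(2) by simp
      also have "\<dots> = (g \<circ> f) ` D i" by (rule image_comp)
      finally have "g ` E j = (g \<circ> f) ` D i" .
      then have "g ` E j = F k'" using k' by simp
      then show "k' = k" using ku k' by simp
    qed
  qed
  show ?thesis unfolding decomp_conj_def
    by (rule exI[where x="g \<circ> f"], rule conjI, rule LA, rule CC)
qed



definition dg :: "'a::field^3 \<Rightarrow> 'a m3" where
  "dg v = (\<chi> i j. if i = j then v$i else 0)"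

lemma dg_entry[simp]: "dg v $ i $ j = (if i = j then v$i else 0)"
  by (simp add: dg_def)

lemma dg_conj_entry: "conjm (dg d) (dg e) A $ i $ j = d$i * A$i$j * e$j"
proof -
  have "\<forall>i j. conjm (dg d) (dg e) A $ i $ j = d$i * A$i$j * e$j"
    unfolding conjm_def by (simp add: forall_3 mm_entry)
  then show ?thesis by blast
qed

lemma dg_mult: "(\<forall>i. d$i * e$i = 1) \<Longrightarrow> dg d ** dg e = mat 1"
  by (rule iffD2[OF mat3_eq]) (simp add: forall_3 mm_entry mat_def)

lemma dg_diag0:
  assumes "\<forall>i. d$i * e$i = 1"
  shows "conjm (dg d) (dg e) ` diag0 = diag0"
proof -
  have sub: "conjm (dg d) (dg e) ` diag0 \<subseteq> diag0" if "\<forall>i. d$i * e$i = 1" for d e :: "'a^3"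
  proof
    fix B :: "'a m3" assume "B \<in> conjm (dg d) (dg e) ` diag0"
    then obtain A where A: "A \<in> diag0" "B = conjm (dg d) (dg e) A" by blast
    have "trace B = trace A" using that
    proof -
      have "trace B = d$1 * e$1 * A$1$1 + d$2 * e$2 * A$2$2 + d$3 * e$3 * A$3$3"
        by (simp add: A(2) tr3 dg_conj_entry algebra_simps)
      then show ?thesis using that by (simp add: tr3)
    qed
    then show "B \<in> diag0" using A unfolding diag0_def by (auto simp: dg_conj_entry)
  qed
  have e2: "\<forall>i. e$i * d$i = 1" using assms by (simp add: mult.commute)
  show ?thesis
  proof
    show "conjm (dg d) (dg e) ` diag0 \<subseteq> diag0" using sub assms by blast
    show "diag0 \<subseteq> conjm (dg d) (dg e) ` diag0"
    proof
      fix A :: "'a m3" assume A: "A \<in> diag0"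
      have "conjm (dg e) (dg d) A \<in> diag0" using sub[OF e2] A by blast
      moreover have "A = conjm (dg d) (dg e) (conjm (dg e) (dg d) A)"
      proof (intro iffD2[OF mat3_eq] allI)
        fix i j
        have "conjm (dg d) (dg e) (conjm (dg e) (dg d) A) $ i $ j = (d$i*e$i)*(d$j*e$j)*A$i$j"
          by (simp add: dg_conj_entry algebra_simps)
        then show "A $ i $ j = conjm (dg d) (dg e) (conjm (dg e) (dg d) A) $ i $ j"
          using assms by simp
      qed
      ultimately show "A \<in> conjm (dg d) (dg e) ` diag0" by blast
    qed
  qed
qed




definition ddm :: "'a::field m3" where "ddm = dg (vector [1, -1, 0])"

lemma ddm_diag0: "ddm \<in> diag0"
  by (simp add: ddm_def diag0_def tr3)

lemma ddm_notin: "(ddm::'a::field m3) \<notin> span2 (J3X l m a b) (J3Y l m a b)"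
proof
  assume "(ddm::'a m3) \<in> span2 (J3X l m a b) (J3Y l m a b)"
  then obtain c d where "ddm = msmult c (J3X l m a b) + msmult d (J3Y l m a b)"
    by (auto simp: span2_def)
  then have "(ddm::'a m3)$1$1 = (msmult c (J3X l m a b) + msmult d (J3Y l m a b))$1$1" by simp
  then show False by (simp add: ddm_def)
qed

lemma X_notin_diag0: "J3X l m a b \<notin> diag0"
proof
  assume "J3X l m a b \<in> diag0"
  moreover have "(1::3) \<noteq> 2" by simp
  ultimately have "J3X l m a b $1$2 = 0" unfolding diag0_def by blast
  then show False by simp
qed

lemma X_in_span: "J3X l m a b \<in> span2 (J3X l m a b) (J3Y l m a b)"
proof -
  have "J3X l m a b = msmult 1 (J3X l m a b) + msmult 0 (J3Y l m a b)" by (simp add: sm_1 sm_0)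
  then show ?thesis unfolding span2_def by blast
qed

lemma X_in_span_eq:
  assumes "J3X l m a b \<in> span2 (J3X l' m' a b) (J3Y l' m' a b)" "a \<noteq> 0"
  shows "l = l'"
proof -
  obtain c d where e: "J3X l m a b = msmult c (J3X l' m' a b) + msmult d (J3Y l' m' a b)"
    using assms(1) by (auto simp: span2_def)
  have e12: "J3X l m a b $1$2 = (msmult c (J3X l' m' a b) + msmult d (J3Y l' m' a b))$1$2"
    using e by simp
  have e23: "J3X l m a b $2$3 = (msmult c (J3X l' m' a b) + msmult d (J3Y l' m' a b))$2$3"
    using e by simp
  from e12 have "c = 1" by simp
  with e23 show ?thesis using assms(2) by simp
qed

definition wit :: "'a::field \<Rightarrow> 'a \<Rightarrow> 'a \<Rightarrow> nat \<Rightarrow> 'a m3" where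
  "wit u a b j = (if j = 0 then ddm else if j = 1 then J3X 1 1 a b
     else if j = 2 then J3X u (u^2) a b else J3X (u^2) u a b)"

lemma cube_root_facts:
  fixes u :: "'a::field"
  assumes "u^3 = 1" "u \<noteq> 1"
  shows "u^2 \<noteq> 1" "u \<noteq> u^2" "u \<noteq> 0" "1 + u + u^2 = 0"
proof -
  have u0: "u \<noteq> 0" using assms(1) by auto
  show "u \<noteq> 0" by fact
  show "u^2 \<noteq> 1"
  proof
    assume "u^2 = 1"
    then have "u^3 = u" by (simp add: power3_eq_cube power2_eq_square)
    then show False using assms by simp
  qed
  show "u \<noteq> u^2"
  proof
    assume "u = u^2"
    then have "u * 1 = u * u" by (simp add: power2_eq_square)
    then have "u = 1" using u0 by (metis mult_left_cancel)
    then show False using assms(2) by simp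
  qed
  have "(u - 1) * (1 + u + u^2) = u^3 - 1" by (simp add: algebra_simps power2_eq_square power3_eq_cube)
  then have "(u - 1) * (1 + u + u^2) = 0" using assms(1) by simp
  then show "1 + u + u^2 = 0" using assms(2) by simp
qed

lemma wit_mem:
  fixes u a b :: "'a::field"
  assumes "u^3 = 1" "u \<noteq> 1" "a \<noteq> 0" "j \<in> {0..3}" "k \<in> {0..3}"
  shows "wit u a b j \<in> J3 u a b k \<longleftrightarrow> j = k"
proof -
  note cf = cube_root_facts[OF assms(1,2)]
  have j: "j = 0 \<or> j = 1 \<or> j = 2 \<or> j = 3" using assms(4) by auto
  have k: "k = 0 \<or> k = 1 \<or> k = 2 \<or> k = 3" using assms(5) by auto
  have n1: "\<And>l m l' m'. J3X l m a b \<in> span2 (J3X l' m' a b) (J3Y l' m' a b) \<Longrightarrow> l = l'"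
    using X_in_span_eq assms(3) by blast
  show ?thesis
    using j k cf
    by (auto simp: wit_def J3_def ddm_diag0 ddm_notin X_notin_diag0 X_in_span dest!: n1)
qed

lemma J3_inj:
  fixes u a b :: "'a::field"
  assumes "u^3 = 1" "u \<noteq> 1" "a \<noteq> 0" "j \<in> {0..3}" "k \<in> {0..3}" "J3 u a b j = J3 u a b k"
  shows "j = k"
proof -
  have "wit u a b j \<in> J3 u a b j" using wit_mem[OF assms(1-4) assms(4)] by simp
  then have "wit u a b j \<in> J3 u a b k" using assms(6) by simp
  then show ?thesis using wit_mem[OF assms(1-5)] by simp
qed




lemma span_map:
  assumes "\<And>l m. F (J3X l m a b) = msmult k (J3X l m a' b')"
    and "\<And>l m. F (J3Y l m a b) = msmult k' (J3Y l m a' b')"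
    and "k \<noteq> 0" "k' \<noteq> 0" "F = conjm g h"
  shows "F ` span2 (J3X l m a b) (J3Y l m a b) = span2 (J3X l m a' b') (J3Y l m a' b')"
  using assms by (simp add: span2_image span2_scale)

lemma diag_conj:
  fixes u a b a' b' c :: "'a::field"
  assumes u: "u^3 = 1" "u \<noteq> 1" and nz: "a\<noteq>0" "b\<noteq>0" "a'\<noteq>0" "b'\<noteq>0" "c\<noteq>0"
    and rel: "a^2*b = c^3*a'^2*b'"
  shows "decomp_conj (J3 u a b) (J3 u a' b')"
proof -
  define d where "d = (vector[c^2*a'/a, c*a'/a, 1] :: 'a^3)"
  define e where "e = (vector[a/(c^2*a'), a/(c*a'), 1] :: 'a^3)"
  have de: "\<forall>i. d$i*e$i = 1" using nz by (simp add: forall_3 d_def e_def field_simps)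
  have ed: "\<forall>i. e$i*d$i = 1" using nz by (simp add: forall_3 d_def e_def field_simps)
  define F where "F = conjm (dg d) (dg e)"
  have LA: "lie_aut_sl3 F" unfolding F_def
    by (rule conj_lie_aut) (rule dg_mult[OF de], rule dg_mult[OF ed])
  have bsub: "b = c^3*a'^2*b'/a^2" using rel nz by (simp add: field_simps)
  have fX: "F (J3X l m a b) = msmult c (J3X l m a' b')" for l m
    by (rule iffD2[OF mat3_eq]) (simp add: F_def forall_3 dg_conj_entry d_def e_def bsub nz field_simps power2_eq_square power3_eq_cube)
  have fY: "F (J3Y l m a b) = msmult (c^2*a'/a) (J3Y l m a' b')" for l m
    by (rule iffD2[OF mat3_eq]) (simp add: F_def forall_3 dg_conj_entry d_def e_def bsub nz field_simps power2_eq_square power3_eq_cube)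
  have k2: "c^2*a'/a \<noteq> 0" using nz by simp
  have comp: "F ` J3 u a b j = J3 u a' b' j" for j
  proof (cases "j = 0")
    case True
    then show ?thesis by (simp add: J3_def F_def dg_diag0[OF de])
  next
    case False
    then show ?thesis using span_map[OF fX fY nz(5) k2 F_def] by (simp add: J3_def)
  qed
  show ?thesis
    by (rule decomp_conjI[OF LA]) (use comp J3_inj[OF u nz(3)] in blast)+
qed




definition Pm :: "'a::field m3" where
  "Pm = vector [vector [1,0,0], vector [0,0,1], vector [0,1,0]]"

lemma Pm_entries[simp]:
  "Pm $1$1 = 1" "Pm $1$2 = 0" "Pm $1$3 = 0"
  "Pm $2$1 = 0" "Pm $2$2 = 0" "Pm $2$3 = 1"
  "Pm $3$1 = 0" "Pm $3$2 = 1" "Pm $3$3 = 0"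
  by (simp_all add: Pm_def)

lemma Pm_sq: "(Pm::'a::field m3) ** Pm = mat 1"
  by (rule iffD2[OF mat3_eq]) (simp add: forall_3 mm_entry mat_def)

lemma Pm_conj_explicit:
  "conjm Pm Pm (A::'a::field m3) = vector [vector [A$1$1, A$1$3, A$1$2],
      vector [A$3$1, A$3$3, A$3$2], vector [A$2$1, A$2$3, A$2$2]]"
  by (rule iffD2[OF mat3_eq]) (simp add: forall_3 mm_entry conjm_def)

lemma Pm_diag0: "conjm Pm Pm ` diag0 = (diag0 :: 'a::field m3 set)"
proof -
  have sub: "conjm Pm Pm A \<in> diag0" if "A \<in> diag0" for A :: "'a m3"
  proof -
    have off: "A$i$j = 0" if "i \<noteq> j" for i j using \<open>A \<in> diag0\<close> that unfolding diag0_def by blast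
    have tr: "trace A = 0" using \<open>A \<in> diag0\<close> unfolding diag0_def by blast
    show ?thesis unfolding diag0_def using off tr
      by (simp add: Pm_conj_explicit tr3 forall_3 algebra_simps)
  qed
  have inv: "conjm Pm Pm (conjm Pm Pm A) = A" for A :: "'a m3"
    by (rule iffD2[OF mat3_eq]) (simp add: forall_3 Pm_conj_explicit)
  show ?thesis
  proof
    show "conjm Pm Pm ` diag0 \<subseteq> (diag0 :: 'a m3 set)" using sub by blast
    show "(diag0 :: 'a m3 set) \<subseteq> conjm Pm Pm ` diag0"
    proof
      fix A :: "'a m3" assume "A \<in> diag0"
      then have "conjm Pm Pm A \<in> diag0" by (rule sub)
      then show "A \<in> conjm Pm Pm ` diag0" using inv[of A] by (metis image_eqI)
    qed
  qed
qed

lemma perm_conj: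
  fixes u a b :: "'a::field"
  assumes u: "u^3 = 1" "u \<noteq> 1" and nz: "b \<noteq> 0"
  shows "decomp_conj (J3 u a b) (J3 u b a)"
proof -
  define F where "F = conjm (Pm::'a m3) Pm"
  have LA: "lie_aut_sl3 F" unfolding F_def by (rule conj_lie_aut) (rule Pm_sq, rule Pm_sq)
  have fX: "F (J3X l m a b) = J3Y l m b a" for l m
    by (rule iffD2[OF mat3_eq]) (simp add: F_def forall_3 Pm_conj_explicit algebra_simps)
  have fY: "F (J3Y l m a b) = J3X l m b a" for l m
    by (rule iffD2[OF mat3_eq]) (simp add: F_def forall_3 Pm_conj_explicit algebra_simps)
  have comp: "F ` J3 u a b j = J3 u b a j" for j
  proof (cases "j = 0")
    case True
    then show ?thesis by (simp add: J3_def F_def Pm_diag0)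
  next
    case False
    have sp: "F ` span2 (J3X l m a b) (J3Y l m a b) = span2 (J3X l m b a) (J3Y l m b a)" for l m
    proof -
      have "F ` span2 (J3X l m a b) (J3Y l m a b) = span2 (F (J3X l m a b)) (F (J3Y l m a b))"
        unfolding F_def by (rule span2_image)
      then show ?thesis by (simp add: fX fY span2_swap)
    qed
    then show ?thesis using False by (simp add: J3_def)
  qed
  show ?thesis
    by (rule decomp_conjI[OF LA]) (use comp J3_inj[OF u nz] in blast)+
qed




lemma cube_classes:
  fixes u z x :: "'a::{field,finite}"
  assumes u: "u^3 = 1" "u \<noteq> 1" and z: "z \<noteq> 0" "\<not> (\<exists>w. w^3 = z)" and x: "x \<noteq> 0"
  shows "\<exists>c. c \<noteq> 0 \<and> (x = c^3 \<or> x = z*c^3 \<or> x = z^2*c^3)"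
proof -
  note cf = cube_root_facts[OF u]
  define U where "U = (UNIV - {0} :: 'a set)"
  define K where "K = (\<lambda>c. c^3) ` U"
  define fib where "fib y = {w. w \<noteq> 0 \<and> w^3 = y}" for y :: 'a
  have fibc: "fib (c^3) = {c, u*c, u^2*c}" if c: "c \<noteq> 0" for c
  proof
    show "{c, u*c, u^2*c} \<subseteq> fib (c^3)"
    proof -
      have "(u*c)^3 = c^3" "(u^2*c)^3 = c^3"
      proof -
        have u6: "u^6 = (u^3)^2" by (simp flip: power_mult)
        show "(u*c)^3 = c^3" "(u^2*c)^3 = c^3"
          using u(1) u6 by (simp_all add: power_mult_distrib flip: power_mult)
      qed
      then show ?thesis using c cf(3) by (simp add: fib_def)
    qed
    show "fib (c^3) \<subseteq> {c, u*c, u^2*c}"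
    proof
      fix w assume "w \<in> fib (c^3)"
      then have w: "w^3 = c^3" by (simp add: fib_def)
      have "(w - c)*(w - u*c)*(w - u^2*c) = w^3 - (1+u+u^2)*c*w^2 + u*(1+u+u^2)*c^2*w - u^3*c^3"
        by (simp add: algebra_simps power2_eq_square power3_eq_cube)
      also have "\<dots> = 0" using w u(1) cf(4) by simp
      finally show "w \<in> {c, u*c, u^2*c}" by auto
    qed
  qed
  have card3: "card (fib y) = 3" if "y \<in> K" for y
  proof -
    obtain c where c: "c \<noteq> 0" "y = c^3" using \<open>y \<in> K\<close> by (auto simp: K_def U_def)
    have d1: "c \<noteq> u*c" using c(1) u(2) by (metis mult_cancel_right2)
    have d2: "c \<noteq> u^2*c" using c(1) cf(1) by (metis mult_cancel_right2)
    have d3: "u*c \<noteq> u^2*c" using c(1) cf(2) by simp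
    show ?thesis using fibc[OF c(1)] c(2) d1 d2 d3 by simp
  qed
  have fin: "finite A" for A :: "'a set" by simp
  have Uu: "\<Union> (fib ` K) = U"
  proof
    show "\<Union> (fib ` K) \<subseteq> U" by (auto simp: fib_def U_def)
    show "U \<subseteq> \<Union> (fib ` K)"
    proof
      fix w assume "w \<in> U"
      then have "w \<in> fib (w^3)" "w^3 \<in> K" by (auto simp: fib_def U_def K_def)
      then show "w \<in> \<Union> (fib ` K)" by blast
    qed
  qed
  have disj: "\<forall>c1\<in>fib ` K. \<forall>c2\<in>fib ` K. c1 \<noteq> c2 \<longrightarrow> c1 \<inter> c2 = {}"
    by (auto simp: fib_def)
  have "3 * card (fib ` K) = card (\<Union> (fib ` K))"
    by (rule card_partition) (use card3 disj in auto)
  moreover have "inj_on fib K"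
  proof
    fix y1 y2 assume "y1 \<in> K" "y2 \<in> K" "fib y1 = fib y2"
    then obtain c where "c \<noteq> 0" "y1 = c^3" by (auto simp: K_def U_def)
    then have "c \<in> fib y1" by (simp add: fib_def)
    then have "c \<in> fib y2" using \<open>fib y1 = fib y2\<close> by simp
    then show "y1 = y2" using \<open>y1 = c^3\<close> by (simp add: fib_def)
  qed
  ultimately have cU: "card U = 3 * card K" using Uu by (simp add: card_image)
  define K1 where "K1 = (\<lambda>y. z*y) ` K"
  define K2 where "K2 = (\<lambda>y. z^2*y) ` K"
  have c1: "card K1 = card K" unfolding K1_def by (rule card_image) (use z(1) in \<open>auto simp: inj_on_def\<close>)
  have c2: "card K2 = card K" unfolding K2_def by (rule card_image) (use z(1) in \<open>auto simp: inj_on_def\<close>)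
  have zz: "\<not> (\<exists>w. w^3 = z^2)"
  proof
    assume "\<exists>w. w^3 = z^2"
    then obtain w where w: "w^3 = z^2" by blast
    have "(z/w)^3 = z" using w z(1) by (simp add: power_divide power3_eq_cube power2_eq_square)
    then show False using z(2) by blast
  qed
  have D01: "K \<inter> K1 = {}"
  proof (rule ccontr)
    assume "K \<inter> K1 \<noteq> {}"
    then obtain a b where ab: "a \<noteq> 0" "b \<noteq> 0" "a^3 = z*b^3" by (auto simp: K_def K1_def U_def)
    then have "(a/b)^3 = z" by (simp add: power_divide)
    then show False using z(2) by blast
  qed
  have D02: "K \<inter> K2 = {}"
  proof (rule ccontr)
    assume "K \<inter> K2 \<noteq> {}"
    then obtain a b where ab: "a \<noteq> 0" "b \<noteq> 0" "a^3 = z^2*b^3" by (auto simp: K_def K2_def U_def)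
    then have "(a/b)^3 = z^2" by (simp add: power_divide)
    then show False using zz by blast
  qed
  have D12: "K1 \<inter> K2 = {}"
  proof (rule ccontr)
    assume "K1 \<inter> K2 \<noteq> {}"
    then obtain a b where ab: "a \<noteq> 0" "b \<noteq> 0" "z*a^3 = z^2*b^3" by (auto simp: K1_def K2_def K_def U_def)
    then have "a^3 = z*b^3" using z(1) by (simp add: power2_eq_square)
    then have "(a/b)^3 = z" using ab by (simp add: power_divide)
    then show False using z(2) by blast
  qed
  have sub: "K \<union> K1 \<union> K2 \<subseteq> U" using z(1) by (auto simp: K_def K1_def K2_def U_def)
  have "card (K \<union> K1 \<union> K2) = card K + card K1 + card K2"
    using D01 D02 D12 by (simp add: card_Un_disjoint Int_Un_distrib2)
  then have "card (K \<union> K1 \<union> K2) = card U" using cU c1 c2 by simp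
  then have "K \<union> K1 \<union> K2 = U" using sub by (simp add: card_subset_eq)
  moreover have "x \<in> U" using x by (simp add: U_def)
  ultimately show ?thesis by (auto simp: K_def K1_def K2_def U_def)
qed




definition Mm :: "'a::field \<Rightarrow> 'a \<Rightarrow> 'a \<Rightarrow> 'a \<Rightarrow> 'a m3" where
  "Mm z a b c = vector [vector [a, b, c], vector [c*z, a, b], vector [b*z, c*z, a]]"

lemma Mm_entries[simp]:
  "Mm z a b c $1$1 = a" "Mm z a b c $1$2 = b" "Mm z a b c $1$3 = c"
  "Mm z a b c $2$1 = c*z" "Mm z a b c $2$2 = a" "Mm z a b c $2$3 = b"
  "Mm z a b c $3$1 = b*z" "Mm z a b c $3$2 = c*z" "Mm z a b c $3$3 = a"
  by (simp_all add: Mm_def)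

definition nrm :: "'a::field \<Rightarrow> 'a \<Rightarrow> 'a \<Rightarrow> 'a \<Rightarrow> 'a" where
  "nrm z a b c = a^3 + b^3*z + c^3*z^2 - 3*a*b*c*z"

lemma Mm_adj: "Mm z a b c ** Mm z (a^2 - b*c*z) (c^2*z - a*b) (b^2 - a*c) = mat (nrm z a b c)"
  by (rule iffD2[OF mat3_eq]) (simp add: forall_3 mm_entry mat_def nrm_def algebra_simps power2_eq_square power3_eq_cube)

lemma aniso:
  fixes z a b c :: "'a::field"
  assumes z: "\<not> (\<exists>w. w^3 = z)" and N: "nrm z a b c = 0"
  shows "a = 0 \<and> b = 0 \<and> c = 0"
proof -
  define a' where "a' = a^2 - b*c*z"
  define b' where "b' = c^2*z - a*b"
  define c' where "c' = b^2 - a*c"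
  have i1: "b'^2 - a'*c' = c * nrm z a b c"
    by (simp add: a'_def b'_def c'_def nrm_def algebra_simps power2_eq_square power3_eq_cube)
  have i2: "a'^2 - z*b'*c' = a * nrm z a b c"
    by (simp add: a'_def b'_def c'_def nrm_def algebra_simps power2_eq_square power3_eq_cube)
  have i3: "z*c'^2 - a'*b' = b * nrm z a b c"
    by (simp add: a'_def b'_def c'_def nrm_def algebra_simps power2_eq_square power3_eq_cube)
  have e1: "b'^2 = a'*c'" using i1 N by simp
  have e2: "a'^2 = z*b'*c'" using i2 N by simp
  have e3: "z*c'^2 = a'*b'" using i3 N by simp
  have c'0: "c' = 0"
  proof (rule ccontr)
    assume c: "c' \<noteq> 0"
    have "b'^3 = c' * (a'*b')" using e1 by (simp add: power3_eq_cube power2_eq_square algebra_simps)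
    also have "\<dots> = z * c'^3" using e3[symmetric] by (simp add: power3_eq_cube power2_eq_square algebra_simps)
    finally have "(b'/c')^3 = z" using c by (simp add: power_divide)
    then show False using z by blast
  qed
  then have b'0: "b' = 0" using e1 by simp
  have a'0: "a' = 0" using e2 b'0 by simp
  have f1: "a^2 = b*c*z" "c^2*z = a*b" "b^2 = a*c"
    using a'0 b'0 c'0 by (simp_all add: a'_def b'_def c'_def)
  have c0: "c = 0"
  proof (rule ccontr)
    assume c: "c \<noteq> 0"
    have "c^2*z*c = a*c*b" using f1(2) by simp
    also have "\<dots> = b^3" using f1(3) by (simp add: power3_eq_cube power2_eq_square algebra_simps)
    finally have "c^3 * z = b^3" by (simp add: power3_eq_cube power2_eq_square algebra_simps)
    then have "(b/c)^3 = z" using c by (simp add: power_divide field_simps)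
    then show False using z by blast
  qed
  then show ?thesis using f1 by simp
qed




lemma mm_mat: "(B::'a::field m3) ** mat r = msmult r B"
  by (rule iffD2[OF mat3_eq]) (simp add: forall_3 mm_entry mat_def)
lemma mat_mm: "mat r ** (B::'a::field m3) = msmult r B"
  by (rule iffD2[OF mat3_eq]) (simp add: forall_3 mm_entry mat_def)

lemma no_eig:
  fixes z s t lam :: "'a::field" and B :: "'a m3"
  assumes z: "\<not> (\<exists>w. w^3 = z)" and three: "(3::'a) \<noteq> 0"
    and st: "s \<noteq> 0 \<or> t \<noteq> 0" and lam: "lam \<noteq> 0"
    and eq: "Mm z 0 s t ** B - B ** Mm z 0 s t = msmult lam B"
  shows "B = 0"
proof -
  define A where "A = Mm z 0 s t"
  define Z where "Z = A + mat lam"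
  define q where "q = 3 * s * t * z"
  define r where "r = s^3*z + t^3*z^2"
  have H1: "A ** B = B ** A + msmult lam B" using eq unfolding A_def by (simp add: algebra_simps)
  have BZ: "B ** Z = A ** B" unfolding Z_def by (simp add: mm_ladd mm_mat H1)
  have BZ3: "B ** (Z ** Z ** Z) = (A ** A ** A) ** B"
  proof -
    have "B ** (Z ** Z ** Z) = ((B ** Z) ** Z) ** Z" by (simp add: matrix_mul_assoc)
    also have "\<dots> = ((A ** B) ** Z) ** Z" by (simp add: BZ)
    also have "\<dots> = (A ** (B ** Z)) ** Z" by (simp add: matrix_mul_assoc)
    also have "\<dots> = (A ** (A ** B)) ** Z" by (simp add: BZ)
    also have "\<dots> = A ** (A ** (B ** Z))" by (simp add: matrix_mul_assoc)
    also have "\<dots> = A ** (A ** (A ** B))" by (simp add: BZ)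
    also have "\<dots> = (A ** A ** A) ** B" by (simp add: matrix_mul_assoc)
    finally show ?thesis .
  qed
  have CH: "A ** A ** A = msmult q A + mat r"
    unfolding A_def q_def r_def
    by (rule iffD2[OF mat3_eq]) (simp add: forall_3 mm_entry mat_def algebra_simps power2_eq_square power3_eq_cube)
  define W where "W = Z ** Z ** Z - msmult q Z - mat r"
  have BW: "B ** W = 0"
  proof -
    have "B ** W = B ** (Z ** Z ** Z) - msmult q (B ** Z) - msmult r B"
      unfolding W_def by (simp add: mm_lsub mm_rsm mm_mat)
    also have "\<dots> = (msmult q A + mat r) ** B - msmult q (A ** B) - msmult r B"
      by (simp add: BZ3 CH BZ)
    also have "\<dots> = 0" by (simp add: mm_radd mm_lsm mat_mm)
    finally show ?thesis .
  qed
  define al where "al = lam^2 + 3* s*t*z"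
  define be where "be = 3*t^2*z + 3*lam* s"
  define ga where "ga = 3* s^2 + 3*lam*t"
  have WM: "W = msmult lam (Mm z al be ga)"
    unfolding W_def Z_def A_def q_def r_def al_def be_def ga_def
    by (rule iffD2[OF mat3_eq]) (simp add: forall_3 mm_entry mat_def algebra_simps power2_eq_square power3_eq_cube)
  have BM: "B ** Mm z al be ga = 0"
  proof -
    have "msmult lam (B ** Mm z al be ga) = 0" using BW by (simp add: WM mm_rsm)
    then show ?thesis using lam by (auto simp: mat3_eq)
  qed
  have Nnz: "nrm z al be ga \<noteq> 0"
  proof
    assume "nrm z al be ga = 0"
    then have "al = 0 \<and> be = 0 \<and> ga = 0" using aniso[OF z] by blast
    then have h: "3*(t^2*z + lam * s) = 0" "3*(s^2 + lam*t) = 0"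
      unfolding be_def ga_def by (simp_all add: algebra_simps)
    have "t^2*z + lam * s = 0" using h(1) three mult_eq_0_iff by blast
    moreover have "s^2 + lam*t = 0" using h(2) three mult_eq_0_iff by blast
    ultimately have b0: "t^2*z = - (lam * s)" and g0: "s^2 = - (lam*t)"
      by (simp_all add: eq_neg_iff_add_eq_0)
    show False
    proof (cases "s = 0")
      case True
      then have "t = 0" using g0 lam by simp
      then show False using st True by simp
    next
      case False
      have t: "t = - (s^2/lam)" using g0 lam by (simp add: field_simps)
      have "lam * s * lam^2 = - (t^2*z*lam^2)" using b0 by simp
      also have "\<dots> = - (s^4 * z)" using lam by (simp add: t power2_eq_square field_simps eval_nat_numeral)
      finally have "s * (s^3 * z) = s * (- (lam^3))"
        by (simp add: power2_eq_square power3_eq_cube algebra_simps eval_nat_numeral)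
      then have "s^3 * z = - (lam^3)" using False by (rule mult_left_cancel[THEN iffD1, rotated])
      then have "z = - (lam^3) / s^3" using False by (simp add: field_simps)
      then have "(-lam/s)^3 = z" by (simp add: power_divide)
      then show False using z by blast
    qed
  qed
  have "msmult (nrm z al be ga) B = B ** (Mm z al be ga ** Mm z (al^2 - be*ga*z) (ga^2*z - al*be) (be^2 - al*ga))"
    by (simp add: Mm_adj mm_mat)
  also have "\<dots> = 0" by (simp add: matrix_mul_assoc BM)
  finally have "msmult (nrm z al be ga) B = 0" .
  then show ?thesis using Nnz by (auto simp: mat3_eq)
qed




definition Bm :: "'a::field \<Rightarrow> 'a \<Rightarrow> 'a \<Rightarrow> 'a m3" where
  "Bm l m u = vector [vector [u, 1, l*u^2], vector [u, 1, l*u^2], vector [m*u, m, u^2]]"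

lemma Bm_entries[simp]:
  "Bm l m u $1$1 = u" "Bm l m u $1$2 = 1" "Bm l m u $1$3 = l*u^2"
  "Bm l m u $2$1 = u" "Bm l m u $2$2 = 1" "Bm l m u $2$3 = l*u^2"
  "Bm l m u $3$1 = m*u" "Bm l m u $3$2 = m" "Bm l m u $3$3 = u^2"
  by (simp_all add: Bm_def)

lemma eigB:
  fixes l m u :: "'a::field"
  assumes lm: "l*m = 1" and u: "u^3 = 1"
  shows "lie_bracket (J3X l m 1 1) (Bm l m u) = msmult (1-u) (Bm l m u)"
proof -
  have r1: "l*(m*x) = x" for x using lm by (simp add: mult.assoc[symmetric])
  have r2: "m*(l*x) = x" for x using lm by (simp add: mult.assoc[symmetric] mult.commute)
  have r3: "u*(u*u) = 1" using u by (metis power3_eq_cube mult.assoc)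
  have r4: "u*(u*(u*x)) = x" for x using r3 by (simp add: mult.assoc[symmetric])
  show ?thesis
    by (rule iffD2[OF mat3_eq]) (simp add: forall_3 mm_entry lie_bracket_def algebra_simps power2_eq_square r1 r2 r3 r4 lm)
qed

definition E12 :: "'a::field m3" where
  "E12 = vector [vector [0, 1, 0], vector [0, 0, 0], vector [0, 0, 0]]"

lemma E12_entries[simp]:
  "E12 $1$1 = 0" "E12 $1$2 = 1" "E12 $1$3 = 0"
  "E12 $2$1 = 0" "E12 $2$2 = 0" "E12 $2$3 = 0"
  "E12 $3$1 = 0" "E12 $3$2 = 0" "E12 $3$3 = 0"
  by (simp_all add: E12_def)

lemma nz12: "(A::'a::field m3) $1$2 \<noteq> 0 \<Longrightarrow> A \<noteq> 0" by auto

lemma witness_E: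
  fixes u :: "'a::field"
  assumes u: "u^3 = 1" "u \<noteq> 1" and j: "j \<in> {0..3}"
  shows "\<exists>A\<in>J3 u 1 1 j. A \<noteq> 0 \<and> (\<exists>B\<in>sl3. B \<noteq> 0 \<and> (\<exists>lam. lam \<noteq> 0 \<and> lie_bracket A B = msmult lam B))"
proof -
  note cf = cube_root_facts[OF u]
  have gen: "\<exists>A\<in>span2 (J3X l m 1 1) (J3Y l m 1 1). A \<noteq> 0 \<and> (\<exists>B\<in>sl3. B \<noteq> 0 \<and> (\<exists>lam. lam \<noteq> 0 \<and> lie_bracket A B = msmult lam B))"
    if lm: "l*m = 1" for l m :: 'a
  proof (rule bexI[of _ "J3X l m 1 1"], rule conjI)
    show "J3X l m 1 1 \<in> span2 (J3X l m 1 1) (J3Y l m 1 1)" by (rule X_in_span)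
    show "J3X l m 1 1 \<noteq> 0" by (rule nz12) simp
    have "u + 1 + u^2 = 0" using cf(4) by (metis add.commute)
    then have bsl: "Bm l m u \<in> sl3" by (simp add: sl3_def tr3)
    have b0: "Bm l m u \<noteq> 0" by (rule nz12) simp
    have l0: "1 - u \<noteq> 0" using u(2) by simp
    have eg: "lie_bracket (J3X l m 1 1) (Bm l m u) = msmult (1-u) (Bm l m u)" by (rule eigB[OF lm u(1)])
    show "\<exists>B\<in>sl3. B \<noteq> 0 \<and> (\<exists>lam. lam \<noteq> 0 \<and> lie_bracket (J3X l m 1 1) B = msmult lam B)"
      apply (rule bexI[OF _ bsl], rule conjI[OF b0], rule exI[of _ "1-u"])
      using l0 eg by simp
  qed
  have g1: "(1::'a)*1 = 1" by simp
  have g2: "u * u^2 = 1" using u(1) by (metis power3_eq_cube power2_eq_square mult.assoc)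
  have g3: "u^2 * u = 1" using u(1) by (metis power3_eq_cube power2_eq_square mult.assoc)
  have j4: "j = 0 \<or> j = 1 \<or> j = 2 \<or> j = 3" using j by auto
  have case0: "\<exists>A\<in>(diag0::'a m3 set). A \<noteq> 0 \<and> (\<exists>B\<in>sl3. B \<noteq> 0 \<and> (\<exists>lam. lam \<noteq> 0 \<and> lie_bracket A B = msmult lam B))"
  proof -
    let ?A = "dg (vector [1, 0, -1]) :: 'a m3"
    have a1: "?A \<in> diag0" by (simp add: diag0_def tr3)
    have a2: "?A \<noteq> 0"
    proof
      assume "?A = 0"
      then have "?A $1$1 = 0" by simp
      then show False by simp
    qed
    have a3: "E12 \<in> sl3" by (simp add: sl3_def tr3)
    have a4: "E12 \<noteq> (0::'a m3)" by (rule nz12) simp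
    have a5: "lie_bracket ?A E12 = msmult 1 E12"
      by (rule iffD2[OF mat3_eq]) (simp add: forall_3 mm_entry lie_bracket_def)
    show ?thesis
      apply (rule bexI[OF _ a1], rule conjI[OF a2], rule bexI[OF _ a3], rule conjI[OF a4], rule exI[of _ 1])
      using a5 by simp
  qed
  from j4 show ?thesis
  proof (elim disjE)
    assume "j = 0" then show ?thesis using case0 by (simp add: J3_def)
  next
    assume "j = 1" then show ?thesis using gen[OF g1] by (simp add: J3_def)
  next
    assume "j = 2" then show ?thesis using gen[OF g2] by (simp add: J3_def)
  next
    assume "j = 3" then show ?thesis using gen[OF g3] by (simp add: J3_def)
  qed
qed




lemma part2:
  fixes u z :: "'a::field"
  assumes u: "u^3 = 1" "u \<noteq> 1" and z: "\<not> (\<exists>w. w^3 = z)" and three: "(3::'a) \<noteq> 0"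
  shows "\<not> decomp_conj (J3 u 1 z) (J3 u 1 1)"
proof
  assume "decomp_conj (J3 u 1 z) (J3 u 1 1)"
  then obtain f where f1: "lie_aut_sl3 f" and f2: "\<forall>i\<in>{0..3}. \<exists>!j. j \<in> {0..3} \<and> f ` J3 u 1 z i = J3 u 1 1 j"
    unfolding decomp_conj_def by (elim exE conjE)
  have "\<exists>!j. j \<in> {0..3} \<and> f ` J3 u 1 z 1 = J3 u 1 1 j" using f2 by simp
  then obtain j where j: "j \<in> {0..3}" "f ` J3 u 1 z 1 = J3 u 1 1 j" by (elim ex1E conjE)
  from witness_E[OF u j(1)] obtain A where A1: "A \<in> J3 u 1 1 j"
    and A2: "A \<noteq> 0 \<and> (\<exists>B\<in>sl3. B \<noteq> 0 \<and> (\<exists>lam. lam \<noteq> 0 \<and> lie_bracket A B = msmult lam B))"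
    by (rule bexE)
  from A2 have "\<exists>B\<in>sl3. B \<noteq> 0 \<and> (\<exists>lam. lam \<noteq> 0 \<and> lie_bracket A B = msmult lam B)" by (rule conjunct2)
  then obtain B where B1: "B \<in> sl3" and B2: "B \<noteq> 0 \<and> (\<exists>lam. lam \<noteq> 0 \<and> lie_bracket A B = msmult lam B)"
    by (rule bexE)
  from B2 have "\<exists>lam. lam \<noteq> 0 \<and> lie_bracket A B = msmult lam B" by (rule conjunct2)
  then obtain lam where lam: "lam \<noteq> 0" "lie_bracket A B = msmult lam B" by (elim exE conjE)
  have A: "A \<in> J3 u 1 1 j" "A \<noteq> 0" using A1 A2 by simp_all
  have B: "B \<in> sl3" "B \<noteq> 0" using B1 B2 by simp_all
  have bij: "bij_betw f sl3 sl3" using f1 unfolding lie_aut_sl3_def by (rule conjunct1)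
  have fadd: "\<forall>A\<in>sl3. \<forall>B\<in>sl3. f (A + B) = f A + f B"
    using f1 unfolding lie_aut_sl3_def by (elim conjE) assumption
  have fsm: "\<forall>c. \<forall>A\<in>sl3. f (msmult c A) = msmult c (f A)"
    using f1 unfolding lie_aut_sl3_def by (elim conjE) assumption
  have fbr: "\<forall>A\<in>sl3. \<forall>B\<in>sl3. f (lie_bracket A B) = lie_bracket (f A) (f B)"
    using f1 unfolding lie_aut_sl3_def by (elim conjE) assumption
  have z0: "(0::'a m3) \<in> sl3" by (simp add: sl3_def tr3)
  have f0: "f 0 = 0"
  proof -
    have "f (0 + 0) = f 0 + f 0" using bspec[OF bspec[OF fadd z0] z0] .
    then show ?thesis by simp
  qed
  have inj: "inj_on f sl3" using bij by (simp add: bij_betw_def)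
  have surj: "f ` sl3 = sl3" using bij by (simp add: bij_betw_def)
  have "A \<in> f ` J3 u 1 z 1" using A(1) j(2) by simp
  then obtain A' where A'0: "A = f A'" "A' \<in> J3 u 1 z 1" by (rule imageE)
  then have A': "A' \<in> J3 u 1 z 1" "f A' = A" by simp_all
  have "B \<in> f ` sl3" using B(1) surj by simp
  then obtain B'' where B''0: "B = f B''" "B'' \<in> sl3" by (rule imageE)
  define B' where "B' = B''"
  have B': "B' \<in> sl3" "f B' = B" using B''0 by (simp_all add: B'_def)
  obtain s t where st: "A' = msmult s (J3X 1 1 1 z) + msmult t (J3Y 1 1 1 z)"
    using A'(1) by (auto simp: J3_def span2_def)
  have AM: "A' = Mm z 0 s t" unfolding st
    by (rule iffD2[OF mat3_eq]) (simp add: forall_3 Mm_def)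
  have A'sl: "A' \<in> sl3" by (simp add: AM sl3_def tr3)
  have A'0: "A' \<noteq> 0"
  proof
    assume "A' = 0"
    then have "A = 0" using A'(2) f0 by simp
    then show False using A(2) by simp
  qed
  have st0: "s \<noteq> 0 \<or> t \<noteq> 0"
  proof (rule ccontr)
    assume "\<not> (s \<noteq> 0 \<or> t \<noteq> 0)"
    then have "A' = 0" unfolding AM by (intro iffD2[OF mat3_eq]) (simp add: forall_3)
    then show False using A'0 by simp
  qed
  have B'0: "B' \<noteq> 0"
  proof
    assume "B' = 0"
    then have "B = 0" using B'(2) f0 by simp
    then show False using B(2) by simp
  qed
  have br_sl: "lie_bracket A' B' \<in> sl3"
  proof -
    have "trace (lie_bracket A' B') = trace (A' ** B') - trace (B' ** A')"
      by (simp add: lie_bracket_def trace_sub)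
    also have "\<dots> = 0" using trace_mul_sym[of A' B'] by simp
    finally show ?thesis by (simp add: sl3_def)
  qed
  have sm_sl: "msmult lam B' \<in> sl3"
  proof -
    have "trace (msmult lam B') = lam * trace B'" by (simp add: tr3 algebra_simps)
    then show ?thesis using B'(1) by (simp add: sl3_def)
  qed
  have "f (lie_bracket A' B') = lie_bracket (f A') (f B')" using bspec[OF bspec[OF fbr A'sl] B'(1)] .
  also have "\<dots> = msmult lam B" using A'(2) B'(2) lam(2) by simp
  also have "\<dots> = f (msmult lam B')" using bspec[OF spec[OF fsm, of lam] B'(1)] B'(2) by simp
  finally have "f (lie_bracket A' B') = f (msmult lam B')" .
  then have "lie_bracket A' B' = msmult lam B'" by (rule inj_onD[OF inj _ br_sl sm_sl])
  then have "Mm z 0 s t ** B' - B' ** Mm z 0 s t = msmult lam B'" by (simp add: AM lie_bracket_def)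
  then have "B' = 0" by (rule no_eig[OF z three st0 lam(1)])
  then show False using B'0 by simp
qed




theorem theorem3p11:
  fixes u z :: "'a::{field, finite}"
  assumes "CHAR('a) > 3"
    and "3 dvd (CARD('a) - 1)"
    and "u ^ 3 = 1" and "u \<noteq> 1"
    and "z \<noteq> 0" and "\<not> (\<exists>w. w ^ 3 = z)"
  shows "decomp_conj (J3 u 1 (z ^ 2)) (J3 u 1 z)
       \<and> \<not> decomp_conj (J3 u 1 z) (J3 u 1 1)
       \<and> (\<forall>a b. a \<noteq> 0 \<longrightarrow> b \<noteq> 0 \<longrightarrow>
             decomp_conj (J3 u a b) (J3 u 1 1) \<or> decomp_conj (J3 u a b) (J3 u 1 z))"
proof -
  note u = assms(3,4)
  have three: "(3::'a) \<noteq> 0"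
  proof
    assume "(3::'a) = 0"
    then have "of_nat 3 = (0::'a)" by simp
    then have "CHAR('a) dvd 3" by (simp only: of_nat_eq_0_iff_char_dvd)
    then have "CHAR('a) \<le> 3" by (rule dvd_imp_le) simp
    then show False using assms(1) by simp
  qed
  have z2: "z^2 \<noteq> 0" using assms(5) by simp
  have P1: "decomp_conj (J3 u 1 (z ^ 2)) (J3 u 1 z)"
  proof (rule decomp_conj_trans)
    show "decomp_conj (J3 u 1 (z ^ 2)) (J3 u (z^2) 1)" by (rule perm_conj[OF u z2])
    show "decomp_conj (J3 u (z^2) 1) (J3 u 1 z)"
      by (rule diag_conj[OF u z2 one_neq_zero one_neq_zero assms(5) assms(5)])
         (simp add: power2_eq_square power3_eq_cube)
  qed
  have P2: "\<not> decomp_conj (J3 u 1 z) (J3 u 1 1)" by (rule part2[OF u assms(6) three])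
  have P3: "decomp_conj (J3 u a b) (J3 u 1 1) \<or> decomp_conj (J3 u a b) (J3 u 1 z)"
    if ab: "a \<noteq> 0" "b \<noteq> 0" for a b
  proof -
    have "a^2*b \<noteq> 0" using ab by simp
    then obtain c where c: "c \<noteq> 0" "a^2*b = c^3 \<or> a^2*b = z*c^3 \<or> a^2*b = z^2*c^3"
      using cube_classes[OF u assms(5,6)] by blast
    from c(2) show ?thesis
    proof (elim disjE)
      assume h: "a^2*b = c^3"
      have "decomp_conj (J3 u a b) (J3 u 1 1)"
        by (rule diag_conj[OF u ab one_neq_zero one_neq_zero c(1)]) (simp add: h)
      then show ?thesis by blast
    next
      assume h: "a^2*b = z*c^3"
      have "decomp_conj (J3 u a b) (J3 u 1 z)"
        by (rule diag_conj[OF u ab one_neq_zero assms(5) c(1)]) (use h in \<open>simp add: algebra_simps\<close>)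
      then show ?thesis by blast
    next
      assume h: "a^2*b = z^2*c^3"
      have "decomp_conj (J3 u a b) (J3 u 1 (z^2))"
        by (rule diag_conj[OF u ab one_neq_zero z2 c(1)]) (use h in \<open>simp add: algebra_simps\<close>)
      then have "decomp_conj (J3 u a b) (J3 u 1 z)" using P1 by (rule decomp_conj_trans)
      then show ?thesis by blast
    qed
  qed
  show ?thesis using P1 P2 P3 by blast
qed



end
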